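(* There is an absolute constant $C>0$ such that the following holds. Let $n\ge 2$, $L>0$, and let $f:[0,1]^n\to\mathbb{R}$ satisfy $|f(x)-f(y)|\le L\|x-y\|$ for all $x,y\in[0,1]^n$. Run the algorithm described in the context on $f$ for $T\ge 1$ queries, with values $f_t=f(P(x_t))$. Then the average regret satisfies $$r_T:=\frac1T\sum_{t=1}^T f_t-\min_{x\in[0,1]^n}f(x)\le C\,L\sqrt{n}\,T^{-1/n}.$$
   Context: Notation: $\|\cdot\|$ is the Euclidean norm; $\Omega=[0,1]^n$; $\theta=2^{1/n}$; $P:\mathbb{R}^n\to\Omega$ is the Euclidean projection onto $\Omega$ (coordinatewise clipping to $[0,1]$); $e_i$ is the $i$-th standard basis vector and $v(i)$ the $i$-th coordinate of $v$. The algorithm maintains a list of candidates, each a triple (center $x$, edge vector $v$, score $s$). Splitting rule: given an evaluated point $x_a$ with edge vector $v_a$ and value $f_a$, let $I$ be an index maximizing $v_a(i)$ over $i\in\{1,\dots,n\}$ (ties broken by smallest index), let $z=\tfrac{v_a(I)}{2}e_I$, and add to the list the two candidates $(x_a+z,\ v_a-z,\ f_a-L\|v_a\|)$ and $(x_a-z,\ v_a-z,\ f_a-L\|v_a\|)$. Initialization: $x_1=v_1=(\theta^{-1},\theta^{-2},\dots,\theta^{-n})$, $f_1=f(P(x_1))$, and apply the splitting rule to $(x_1,v_1,f_1)$. For each $t\ge 2$: remove from the list a candidate with the smallest score (ties arbitrary), call its center $x_t$ and edge vector $v_t$, evaluate $f_t=f(P(x_t))$, and apply the splitting rule to $(x_t,v_t,f_t)$.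 *)

theory Defs
  imports Complex_Main "HOL-Library.Multiset"
begin

text \<open>Vectors of R^n are represented as functions nat => real; coordinate i of the
paper (1..n) is index i-1 here (0..n-1). Coordinates >= n are irrelevant
(the algorithm keeps them 0).\<close>

type_synonym vec = "nat \<Rightarrow> real"
type_synonym cand = "vec \<times> vec \<times> real"  \<comment> \<open>(center, edge vector, score)\<close>

definition vnorm :: "nat \<Rightarrow> vec \<Rightarrow> real" where
  "vnorm n v = sqrt (\<Sum>i<n. (v i)^2)"

definition cube :: "nat \<Rightarrow> vec set" where
  "cube n = {x. (\<forall>i<n. 0 \<le> x i \<and> x i \<le> 1) \<and> (\<forall>i\<ge>n. x i = 0)}"

definition proj :: "nat \<Rightarrow> vec \<Rightarrow> vec" where
  "proj n x = (\<lambda>i. if i < n then max 0 (min 1 (x i)) else 0)"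

definition theta :: "nat \<Rightarrow> real" where
  "theta n = 2 powr (1 / real n)"

definition init_vec :: "nat \<Rightarrow> vec" where
  "init_vec n = (\<lambda>i. if i < n then theta n powr (- real (i + 1)) else 0)"

definition max_idx :: "nat \<Rightarrow> vec \<Rightarrow> nat" where
  "max_idx n v = (LEAST i. i < n \<and> (\<forall>j<n. v j \<le> v i))"

definition split_cands :: "nat \<Rightarrow> real \<Rightarrow> vec \<Rightarrow> vec \<Rightarrow> real \<Rightarrow> cand multiset" where
  "split_cands n L x v fv =
     (let I = max_idx n v;
          z = (\<lambda>j. if j = I then v I / 2 else 0);
          s = fv - L * vnorm n v
      in {# (\<lambda>j. x j + z j, \<lambda>j. v j - z j, s), (\<lambda>j. x j - z j, \<lambda>j. v j - z j, s) #})"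

text \<open>A run of the algorithm: Q t is the candidate list after step t (t >= 1),
X t = (x_t, v_t) is the evaluated point and its edge vector at step t.\<close>
definition is_run :: "nat \<Rightarrow> real \<Rightarrow> (vec \<Rightarrow> real) \<Rightarrow> (nat \<Rightarrow> cand multiset)
                      \<Rightarrow> (nat \<Rightarrow> vec \<times> vec) \<Rightarrow> bool" where
  "is_run n L f Q X \<longleftrightarrow>
     X 1 = (init_vec n, init_vec n) \<and>
     Q 1 = split_cands n L (init_vec n) (init_vec n) (f (proj n (init_vec n))) \<and>
     (\<forall>t\<ge>2. \<exists>s. (fst (X t), snd (X t), s) \<in># Q (t - 1) \<and>
                 (\<forall>c\<in>#Q (t - 1). s \<le> snd (snd c)) \<and>
                 Q t = Q (t - 1) - {# (fst (X t), snd (X t), s) #}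
                       + split_cands n L (fst (X t)) (snd (X t)) (f (proj n (fst (X t)))))"

end

theory Submission imports Defs begin


definition ex :: "nat \<Rightarrow> nat \<Rightarrow> nat \<Rightarrow> nat" where
  "ex n d i = d + 1 + nat ((int i - int d) mod int n)"

definition tp :: "nat \<Rightarrow> nat \<Rightarrow> real" where
  "tp n k = 2 powr (- real k / real n)"

definition vd :: "nat \<Rightarrow> nat \<Rightarrow> vec" where
  "vd n d = (\<lambda>i. if i < n then tp n (ex n d i) else 0)"

lemma tp_pos: "0 < tp n k" by (simp add: tp_def)

lemma tp_le_iff: "n > 0 \<Longrightarrow> tp n a \<le> tp n b \<longleftrightarrow> b \<le> a"
  unfolding tp_def by (simp add: divide_le_cancel)

lemma tp_less_iff: "n > 0 \<Longrightarrow> tp n a < tp n b \<longleftrightarrow> b < a"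
  unfolding tp_def by (simp add: divide_less_cancel)

lemma tp_add: "n > 0 \<Longrightarrow> tp n (k + n) = tp n k / 2"
proof -
  assume n: "n > 0"
  have "(2::real) powr (- real (k + n) / real n) = 2 powr (- real k / real n - 1)"
    using n by (simp add: field_simps)
  also have "\<dots> = 2 powr (- real k / real n) / 2" by (simp add: powr_diff)
  finally show ?thesis by (simp add: tp_def)
qed

lemma tp_n: "n > 0 \<Longrightarrow> tp n n = 1/2"
  by (simp add: tp_def powr_minus)

lemma ex_ge: "d + 1 \<le> ex n d i" by (simp add: ex_def)

lemma ex_le: "n > 0 \<Longrightarrow> ex n d i \<le> d + n"
proof -
  assume n: "n > 0"
  have "nat ((int i - int d) mod int n) < n" using n by (simp add: nat_less_iff)
  then show ?thesis by (simp add: ex_def)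
qed

lemma ex_eq_iff: assumes "n > 0" "i < n" shows "ex n d i = d + 1 \<longleftrightarrow> i = d mod n"
proof -
  have nn: "0 \<le> (int i - int d) mod int n" using assms by simp
  have "ex n d i = d + 1 \<longleftrightarrow> (int i - int d) mod int n = 0"
    using nn by (simp add: ex_def)
  also have "\<dots> \<longleftrightarrow> int i mod int n = int d mod int n"
    by (simp add: mod_eq_dvd_iff dvd_eq_mod_eq_0)
  also have "\<dots> \<longleftrightarrow> i = d mod n"
    using assms by (metis mod_less of_nat_eq_iff zmod_int)
  finally show ?thesis .
qed

lemma ex_step_I: assumes "n > 0" shows "ex n (Suc d) (d mod n) = d + 1 + n"
proof -
  have e: "int (Suc d) = int (d mod n) + 1 + int n * int (d div n)"
    by (metis add.commute add.left_commute div_mult_mod_eq mult.commute of_nat_Suc of_nat_add of_nat_mult)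
  have e2: "int (d mod n) - int (Suc d) = -1 + (- int (d div n)) * int n"
    using e by (simp add: algebra_simps)
  have "(int (d mod n) - int (Suc d)) mod int n = (-1) mod int n"
    by (simp only: e2 mod_mult_self1)
  also have "\<dots> = int n - 1" using assms by (simp add: zmod_minus1)
  finally show ?thesis using assms by (simp add: ex_def)
qed

lemma ex_step_other: assumes "n > 0" "j < n" "j \<noteq> d mod n"
  shows "ex n (Suc d) j = ex n d j"
proof -
  define r where "r = (int j - int d) mod int n"
  have r0: "r \<noteq> 0" using ex_eq_iff[OF assms(1,2), of d] assms by (simp add: ex_def r_def)
  have rr: "0 \<le> r" "r < int n" using assms by (auto simp: r_def)
  have "int j - int (Suc d) = (int j - int d) - 1" by simp
  then have "(int j - int (Suc d)) mod int n = (r - 1) mod int n"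
    by (simp only: r_def mod_diff_left_eq)
  also have "\<dots> = r - 1" using r0 rr by (simp add: mod_pos_pos_trivial)
  finally show ?thesis using r0 rr by (simp add: ex_def r_def[symmetric])
qed

lemma vd_nonneg: "0 \<le> vd n d i" by (simp add: vd_def tp_pos less_imp_le)


lemma max_idx_vd: assumes n: "n > 0" shows "max_idx n (vd n d) = d mod n"
  unfolding max_idx_def
proof (rule Least_equality)
  have eI: "ex n d (d mod n) = d + 1" using ex_eq_iff[OF n, of "d mod n" d] n by simp
  show "d mod n < n \<and> (\<forall>j<n. vd n d j \<le> vd n d (d mod n))"
    using n eI ex_ge[of d n] by (auto simp: vd_def tp_le_iff)
  fix y assume y: "y < n \<and> (\<forall>j<n. vd n d j \<le> vd n d y)"
  then have "vd n d (d mod n) \<le> vd n d y" using n by simp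
  then have "ex n d y \<le> d + 1" using y n eI by (simp add: vd_def tp_le_iff)
  then have "ex n d y = d + 1" using ex_ge[of d n y] by simp
  then have "y = d mod n" using ex_eq_iff[OF n] y by blast
  then show "d mod n \<le> y" by simp
qed

lemma vd_step: assumes n: "n > 0"
  shows "(\<lambda>j. vd n d j - (if j = max_idx n (vd n d) then vd n d (max_idx n (vd n d)) / 2 else 0)) = vd n (Suc d)"
  unfolding max_idx_vd[OF n]
proof
  fix j
  have eI: "ex n d (d mod n) = d + 1" using ex_eq_iff[OF n, of "d mod n" d] n by simp
  show "vd n d j - (if j = d mod n then vd n d (d mod n) / 2 else 0) = vd n (Suc d) j"
  proof (cases "j = d mod n")
    case True
    have "tp n (d + 1 + n) = tp n (d + 1) / 2" using tp_add[OF n, of "d+1"] by simp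
    then show ?thesis using True n eI ex_step_I[OF n, of d]
      by (simp add: vd_def)
  next
    case False
    then show ?thesis using n ex_step_other[OF n, of j d] by (simp add: vd_def)
  qed
qed

lemma vd_lt: assumes n: "n > 0" and dd: "d < d'" shows "vd n d' (d mod n) < vd n d (d mod n)"
proof -
  have eI: "ex n d (d mod n) = d + 1" using ex_eq_iff[OF n, of "d mod n" d] n by simp
  have "d + 1 < ex n d' (d mod n)" using ex_ge[of d' n "d mod n"] dd by simp
  then show ?thesis using n eI by (simp add: vd_def tp_less_iff)
qed

lemma vd_inj: assumes n: "n > 0" and e: "vd n d = vd n d'" shows "d = d'"
proof (rule ccontr)
  assume "d \<noteq> d'"
  then consider "d < d'" | "d' < d" by linarith
  then show False
  proof cases
    case 1 then show False using vd_lt[OF n 1] e by simp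
  next
    case 2 then show False using vd_lt[OF n 2] e by simp
  qed
qed

lemma init_vd: assumes n: "n > 0" shows "init_vec n = vd n 0"
proof
  fix i
  show "init_vec n i = vd n 0 i"
  proof (cases "i < n")
    case True
    have "ex n 0 i = i + 1" using True by (simp add: ex_def)
    moreover have "theta n powr (- real (i + 1)) = tp n (i + 1)"
      unfolding theta_def tp_def by (simp add: powr_powr)
    ultimately show ?thesis using True by (simp add: init_vec_def vd_def)
  next
    case False then show ?thesis by (simp add: init_vec_def vd_def)
  qed
qed

lemma vnorm_mono: assumes "\<forall>i<n. \<bar>a i\<bar> \<le> b i" shows "vnorm n a \<le> vnorm n b"
proof -
  have "(\<Sum>i<n. (a i)^2) \<le> (\<Sum>i<n. (b i)^2)"
  proof (rule sum_mono)
    fix i assume "i \<in> {..<n}"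
    then have "\<bar>a i\<bar> \<le> b i" using assms by simp
    then have "\<bar>a i\<bar>^2 \<le> (b i)^2" by (intro power_mono) auto
    then show "(a i)^2 \<le> (b i)^2" by simp
  qed
  then show ?thesis unfolding vnorm_def by simp
qed

lemma vnorm_nonneg: "0 \<le> vnorm n a"
  unfolding vnorm_def by (simp add: sum_nonneg)

lemma vd_norm: assumes n: "n > 0" shows "vnorm n (vd n d) \<le> sqrt (real n) * tp n (d + 1)"
proof -
  define c where "c = tp n (d + 1)"
  have "(\<Sum>i<n. (vd n d i)^2) \<le> (\<Sum>i<n. c^2)"
  proof (rule sum_mono)
    fix i assume i: "i \<in> {..<n}"
    have "vd n d i \<le> c" using i n ex_ge[of d n i] by (simp add: vd_def c_def tp_le_iff)
    then show "(vd n d i)^2 \<le> c^2" by (simp add: power_mono vd_nonneg)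
  qed
  also have "\<dots> = real n * c^2" by simp
  finally have "vnorm n (vd n d) \<le> sqrt (real n * c^2)" unfolding vnorm_def by simp
  also have "\<dots> = sqrt (real n) * c" using tp_pos[of n "d+1"] by (simp add: real_sqrt_mult c_def)
  finally show ?thesis by (simp add: c_def)
qed

lemma vd0_half: assumes n: "n > 0" and i: "i < n" shows "1 \<le> 2 * vd n 0 i"
proof -
  have "ex n 0 i = i + 1" using i by (simp add: ex_def)
  then have "ex n 0 i \<le> n" using i by simp
  then have "tp n n \<le> vd n 0 i"
    using i n by (simp add: vd_def tp_le_iff)
  moreover have "tp n n = 1/2" using n by (simp add: tp_n)
  ultimately show ?thesis by simp
qed

lemma proj_cube: "proj n x \<in> cube n"
  by (simp add: proj_def cube_def)

lemma proj_id: "y \<in> cube n \<Longrightarrow> proj n y = y"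
  by (auto simp: proj_def cube_def)

lemma clip_lip: "\<bar>max 0 (min 1 a) - max 0 (min 1 b)\<bar> \<le> \<bar>(a::real) - b\<bar>"
  by (simp add: max_def min_def)

lemma proj_lip: "vnorm n (\<lambda>i. proj n a i - proj n b i) \<le> vnorm n (\<lambda>i. a i - b i)"
proof -
  have "\<forall>i<n. \<bar>proj n a i - proj n b i\<bar> \<le> \<bar>a i - b i\<bar>"
    using clip_lip by (simp add: proj_def)
  then have "vnorm n (\<lambda>i. proj n a i - proj n b i) \<le> vnorm n (\<lambda>i. \<bar>a i - b i\<bar>)"
    by (intro vnorm_mono) simp
  also have "\<dots> = vnorm n (\<lambda>i. a i - b i)" by (simp add: vnorm_def)
  finally show ?thesis .
qed

definition inbox :: "nat \<Rightarrow> vec \<Rightarrow> vec \<Rightarrow> vec \<Rightarrow> bool" where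
  "inbox n x v y = (\<forall>i<n. \<bar>y i - x i\<bar> \<le> v i)"

definition lip :: "nat \<Rightarrow> real \<Rightarrow> (vec \<Rightarrow> real) \<Rightarrow> bool" where
  "lip n L f = (\<forall>x\<in>cube n. \<forall>y\<in>cube n. \<bar>f x - f y\<bar> \<le> L * vnorm n (\<lambda>i. x i - y i))"

lemma lipD: "lip n L f \<Longrightarrow> x \<in> cube n \<Longrightarrow> y \<in> cube n \<Longrightarrow> f x - f y \<le> L * vnorm n (\<lambda>i. x i - y i)"
  unfolding lip_def by (meson abs_le_D1)

lemma box_bound: assumes lp: "lip n L f" and L: "L > 0" and y: "y \<in> cube n" and b: "inbox n x v y"
  shows "f (proj n x) - L * vnorm n v \<le> f y"
proof -
  have "f (proj n x) - f y \<le> L * vnorm n (\<lambda>i. proj n x i - y i)"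
    using lipD[OF lp proj_cube y] .
  also have "vnorm n (\<lambda>i. proj n x i - y i) = vnorm n (\<lambda>i. proj n x i - proj n y i)"
    using proj_id[OF y] by simp
  also have "L * \<dots> \<le> L * vnorm n (\<lambda>i. x i - y i)"
    using proj_lip L by (simp add: mult_left_mono)
  also have "L * vnorm n (\<lambda>i. x i - y i) \<le> L * vnorm n v"
  proof -
    have "\<forall>i<n. \<bar>x i - y i\<bar> \<le> v i" using b by (auto simp: inbox_def abs_minus_commute)
    then show ?thesis using L vnorm_mono by (simp add: mult_left_mono)
  qed
  finally show ?thesis by simp
qed

definition goodc :: "nat \<Rightarrow> real \<Rightarrow> (vec \<Rightarrow> real) \<Rightarrow> cand \<Rightarrow> bool" where
  "goodc n L f c = (\<exists>d. fst (snd c) = vd n (Suc d) \<and>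
      f (proj n (fst c)) - snd (snd c) \<le> 2 * L * vnorm n (vd n d) \<and>
      (\<forall>y\<in>cube n. inbox n (fst c) (fst (snd c)) y \<longrightarrow> snd (snd c) \<le> f y))"

lemma child_good: assumes n: "n > 0" and L: "L > 0" and lp: "lip n L f"
  and h: "\<forall>i<n. \<bar>x' i - x i\<bar> + vd n (Suc d) i \<le> vd n d i"
  shows "goodc n L f (x', vd n (Suc d), f (proj n x) - L * vnorm n (vd n d))"
  unfolding goodc_def fst_conv snd_conv
proof (intro exI[of _ d] conjI ballI impI refl)
  have h1: "\<forall>i<n. \<bar>x' i - x i\<bar> \<le> vd n d i" using h vd_nonneg
    by (smt (verit))
  have "f (proj n x') - f (proj n x) \<le> L * vnorm n (\<lambda>i. proj n x' i - proj n x i)"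
    using lipD[OF lp proj_cube proj_cube] .
  also have "\<dots> \<le> L * vnorm n (\<lambda>i. x' i - x i)"
    using proj_lip L by (simp add: mult_left_mono)
  also have "\<dots> \<le> L * vnorm n (vd n d)"
    using vnorm_mono[OF h1] L by (simp add: mult_left_mono)
  finally show "f (proj n x') - (f (proj n x) - L * vnorm n (vd n d)) \<le> 2 * L * vnorm n (vd n d)"
    by simp
next
  fix y assume y: "y \<in> cube n" and b: "inbox n x' (vd n (Suc d)) y"
  have "inbox n x (vd n d) y"
    unfolding inbox_def
  proof (intro allI impI)
    fix i assume i: "i < n"
    have "\<bar>y i - x' i\<bar> \<le> vd n (Suc d) i" using b i by (simp add: inbox_def)
    moreover have "\<bar>y i - x i\<bar> \<le> \<bar>y i - x' i\<bar> + \<bar>x' i - x i\<bar>" by linarith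
    ultimately show "\<bar>y i - x i\<bar> \<le> vd n d i" using h i by fastforce
  qed
  then show "f (proj n x) - L * vnorm n (vd n d) \<le> f y"
    using box_bound[OF lp L y] by blast
qed

lemma aux1: assumes "x \<le> y" "y - x \<le> v" shows "\<bar>y - (x + v/2)\<bar> * 2 \<le> (v::real)"
proof -
  have "\<bar>y - (x + v/2)\<bar> \<le> v/2" unfolding abs_le_iff using assms by linarith
  then show ?thesis by simp
qed

lemma aux2: assumes "\<not> x \<le> y" "x - y \<le> v" shows "\<bar>y - (x - v/2)\<bar> * 2 \<le> (v::real)"
proof -
  have "\<bar>y - (x - v/2)\<bar> \<le> v/2" unfolding abs_le_iff using assms by linarith
  then show ?thesis by simp
qed

lemma split_eq: assumes n: "n > 0"
  shows "\<exists>x1 x2. split_cands n L x (vd n d) fv =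
      {#(x1, vd n (Suc d), fv - L * vnorm n (vd n d)), (x2, vd n (Suc d), fv - L * vnorm n (vd n d))#}
    \<and> (\<forall>i<n. \<bar>x1 i - x i\<bar> + vd n (Suc d) i \<le> vd n d i)
    \<and> (\<forall>i<n. \<bar>x2 i - x i\<bar> + vd n (Suc d) i \<le> vd n d i)
    \<and> (\<forall>y. inbox n x (vd n d) y \<longrightarrow> inbox n x1 (vd n (Suc d)) y \<or> inbox n x2 (vd n (Suc d)) y)"
proof -
  define I where "I = d mod n"
  define z where "z = (\<lambda>j. if j = I then vd n d I / 2 else 0)"
  define s where "s = fv - L * vnorm n (vd n d)"
  have zv: "(\<lambda>j. vd n d j - z j) = vd n (Suc d)"
    using vd_step[OF n, of d] unfolding max_idx_vd[OF n] z_def I_def .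
  have zvi: "vd n (Suc d) i = vd n d i - z i" for i using fun_cong[OF zv, of i] by simp
  have sc0: "split_cands n L x (vd n d) fv = {#(\<lambda>j. x j + z j, \<lambda>j. vd n d j - z j, s), (\<lambda>j. x j - z j, \<lambda>j. vd n d j - z j, s)#}"
    unfolding split_cands_def Let_def max_idx_vd[OF n] z_def I_def s_def by simp
  have sc: "split_cands n L x (vd n d) fv = {#(\<lambda>j. x j + z j, vd n (Suc d), s), (\<lambda>j. x j - z j, vd n (Suc d), s)#}"
    using sc0 zv by simp
  have z0: "0 \<le> z i" for i using vd_nonneg[of n d I] by (simp add: z_def)
  have p1: "\<forall>i<n. \<bar>(x i + z i) - x i\<bar> + vd n (Suc d) i \<le> vd n d i" using z0 zvi by simp
  have p2: "\<forall>i<n. \<bar>(x i - z i) - x i\<bar> + vd n (Suc d) i \<le> vd n d i" using z0 zvi by simp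
  have cov: "inbox n (\<lambda>j. x j + z j) (vd n (Suc d)) y \<or> inbox n (\<lambda>j. x j - z j) (vd n (Suc d)) y"
    if b: "inbox n x (vd n d) y" for y
  proof (cases "x I \<le> y I")
    case True
    have "inbox n (\<lambda>j. x j + z j) (vd n (Suc d)) y"
      unfolding inbox_def
    proof (intro allI impI)
      fix i assume i: "i < n"
      have bi: "\<bar>y i - x i\<bar> \<le> vd n d i" using b i by (simp add: inbox_def)
      show "\<bar>y i - (x i + z i)\<bar> \<le> vd n (Suc d) i"
      proof (cases "i = I")
        case True
        then show ?thesis using bi \<open>x I \<le> y I\<close> aux1[of "x I" "y I" "vd n d I"] by (simp add: zvi z_def)
      next
        case False
        then show ?thesis using bi by (simp add: zvi z_def)
      qed
    qed
    then show ?thesis by blast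
  next
    case False
    have "inbox n (\<lambda>j. x j - z j) (vd n (Suc d)) y"
      unfolding inbox_def
    proof (intro allI impI)
      fix i assume i: "i < n"
      have bi: "\<bar>y i - x i\<bar> \<le> vd n d i" using b i by (simp add: inbox_def)
      show "\<bar>y i - (x i - z i)\<bar> \<le> vd n (Suc d) i"
      proof (cases "i = I")
        case True
        then show ?thesis using bi \<open>\<not> x I \<le> y I\<close> aux2[of "x I" "y I" "vd n d I"] by (simp add: zvi z_def)
      next
        case False
        then show ?thesis using bi by (simp add: zvi z_def)
      qed
    qed
    then show ?thesis by blast
  qed
  show ?thesis
    apply (rule exI[of _ "\<lambda>j. x j + z j"], rule exI[of _ "\<lambda>j. x j - z j"])
    using sc p1 p2 cov by (simp add: s_def)
qed

lemma split_good: assumes n: "n > 0" and L: "L > 0" and lp: "lip n L f"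
  and c: "c \<in># split_cands n L x (vd n d) (f (proj n x))"
  shows "goodc n L f c"
proof -
  obtain x1 x2 where e: "split_cands n L x (vd n d) (f (proj n x)) =
      {#(x1, vd n (Suc d), f (proj n x) - L * vnorm n (vd n d)), (x2, vd n (Suc d), f (proj n x) - L * vnorm n (vd n d))#}"
    and h1: "\<forall>i<n. \<bar>x1 i - x i\<bar> + vd n (Suc d) i \<le> vd n d i"
    and h2: "\<forall>i<n. \<bar>x2 i - x i\<bar> + vd n (Suc d) i \<le> vd n d i"
    using split_eq[OF n, of L x d "f (proj n x)"] by blast
  show ?thesis using c child_good[OF n L lp h1] child_good[OF n L lp h2] unfolding e by auto
qed

lemma split_cover: assumes n: "n > 0" and b: "inbox n x (vd n d) y"
  shows "\<exists>c\<in>#split_cands n L x (vd n d) fv. inbox n (fst c) (fst (snd c)) y"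
proof -
  obtain x1 x2 where e: "split_cands n L x (vd n d) fv =
      {#(x1, vd n (Suc d), fv - L * vnorm n (vd n d)), (x2, vd n (Suc d), fv - L * vnorm n (vd n d))#}"
    and cv: "\<forall>y. inbox n x (vd n d) y \<longrightarrow> inbox n x1 (vd n (Suc d)) y \<or> inbox n x2 (vd n (Suc d)) y"
    using split_eq[OF n, of L x d fv] by blast
  show ?thesis using cv b unfolding e by auto
qed

definition cnt :: "nat \<Rightarrow> nat \<Rightarrow> cand multiset \<Rightarrow> nat" where
  "cnt n k M = size (filter_mset (\<lambda>c. fst (snd c) = vd n k) M)"

lemma split_cnt: assumes n: "n > 0"
  shows "cnt n k (split_cands n L x (vd n d) fv) = (if k = Suc d then 2 else 0)"
proof -
  obtain x1 x2 where e: "split_cands n L x (vd n d) fv =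
      {#(x1, vd n (Suc d), fv - L * vnorm n (vd n d)), (x2, vd n (Suc d), fv - L * vnorm n (vd n d))#}"
    using split_eq[OF n, of L x d fv] by blast
  have "vd n (Suc d) = vd n k \<longleftrightarrow> k = Suc d" using vd_inj[OF n] by blast
  then show ?thesis unfolding e cnt_def by auto
qed

lemma cnt_plus: "cnt n k (M + N) = cnt n k M + cnt n k N"
  by (simp add: cnt_def)

lemma cnt_single: "cnt n k {#c#} = (if fst (snd c) = vd n k then 1 else 0)"
  by (simp add: cnt_def)



lemma tp_pow: "tp n k = tp n 1 ^ k"
proof -
  have a0: "0 < tp n 1" by (rule tp_pos)
  have "tp n 1 ^ k = tp n 1 powr real k" using a0 by (simp add: powr_realpow)
  also have "\<dots> = 2 powr (- real 1 / real n * real k)" by (simp add: tp_def powr_powr)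
  also have "\<dots> = tp n k" by (simp add: tp_def)
  finally show ?thesis by simp
qed

lemma sum_bound:
  fixes g :: "nat \<Rightarrow> nat" assumes n: "n \<ge> 2" and T: "T \<ge> 1"
    and cardb: "\<forall>k. card {t\<in>{1..T}. g t = k} \<le> 2^k"
  shows "(\<Sum>t=1..T. tp n (g t)) \<le> 12 * real T * real T powr (- 1 / real n)"
proof -
  have n0: "n > 0" using n by simp
  define a where "a = tp n 1"
  have tpk: "tp n k = a ^ k" for k unfolding a_def by (rule tp_pow)
  have a0: "0 < a" by (simp add: a_def tp_pos)
  have a1: "a \<le> 1"
  proof -
    have "tp n 1 \<le> tp n 0" using n0 by (simp add: tp_le_iff)
    then show ?thesis by (simp add: a_def tp_def)
  qed
  have a7: "7/10 \<le> a"
  proof (rule ccontr)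
    assume "\<not> 7/10 \<le> a"
    then have "a^2 < (7/10)^2" using a0 by (intro power_strict_mono) auto
    moreover have "tp n n \<le> tp n 2" using n n0 by (simp add: tp_le_iff)
    ultimately show False using tp_n[OF n0] tpk[of 2] by (simp add: power2_eq_square)
  qed
  obtain D where D: "2^D \<le> T" "T < 2^(D+1)" using ex_power_ivl1[of 2 T] T by auto
  have pt: "a ^ g t \<le> (\<Sum>k\<le>D. if g t = k then a^k else 0) + a^(D+1)" for t
  proof (cases "g t \<le> D")
    case True
    then show ?thesis using a0 by (simp add: sum.delta')
  next
    case False
    then have "a ^ g t \<le> a ^ (D+1)" using a0 a1 by (intro power_decreasing) auto
    then show ?thesis using False by (simp add: sum.delta')
  qed
  have "(\<Sum>t=1..T. tp n (g t)) = (\<Sum>t=1..T. a ^ g t)" by (simp add: tpk)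
  also have "\<dots> \<le> (\<Sum>t=1..T. (\<Sum>k\<le>D. if g t = k then a^k else 0) + a^(D+1))"
    by (rule sum_mono) (rule pt)
  also have "\<dots> = (\<Sum>k\<le>D. \<Sum>t=1..T. if g t = k then a^k else 0) + real T * a^(D+1)"
    unfolding sum.distrib by (subst sum.swap) simp
  also have "(\<Sum>k\<le>D. \<Sum>t=1..T. if g t = k then a^k else 0) = (\<Sum>k\<le>D. real (card {t\<in>{1..T}. g t = k}) * a^k)"
    by (simp add: sum.inter_filter[symmetric])
  also have "\<dots> \<le> (\<Sum>k\<le>D. 2^k * a^k)"
  proof (rule sum_mono)
    fix k
    have "real (card {t\<in>{1..T}. g t = k}) \<le> 2^k" using cardb
      by (metis (mono_tags, lifting) numeral_power_le_of_nat_cancel_iff of_nat_le_iff of_nat_numeral of_nat_power)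
    then show "real (card {t\<in>{1..T}. g t = k}) * a^k \<le> 2^k * a^k"
      using a0 by (simp add: mult_right_mono)
  qed
  also have "(\<Sum>k\<le>D. (2::real)^k * a^k) = (\<Sum>k<D+1. (2*a)^k)"
    by (simp add: power_mult_distrib lessThan_Suc_atMost)
  also have "\<dots> = ((2*a)^(D+1) - 1) / (2*a - 1)"
    using a7 by (intro geometric_sum) simp
  also have "\<dots> \<le> (2*a)^(D+1) / (2*a - 1)"
    using a7 by (simp add: divide_right_mono)
  also have "\<dots> = (2*a/(2*a-1)) * (2*a)^D" by (simp add: field_simps)
  also have "\<dots> \<le> 5 * (2*a)^D"
  proof (rule mult_right_mono)
    show "2*a/(2*a-1) \<le> 5" using a7 by (simp add: divide_le_eq)
  qed (use a0 in simp)
  also have "(2*a)^D = 2^D * a^D" by (simp add: power_mult_distrib)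
  also have "5 * (2^D * a^D) \<le> 5 * (real T * a^D)"
  proof -
    have "(2::real)^D \<le> real T" using D(1)
      by (metis numeral_power_le_of_nat_cancel_iff)
    then show ?thesis using a0 by (simp add: mult_right_mono)
  qed
  finally have s1: "(\<Sum>t=1..T. tp n (g t)) \<le> 5 * (real T * a^D) + real T * a^(D+1)" by simp
  have "real T * a^(D+1) \<le> real T * a^D"
    using a0 a1 by (intro mult_left_mono power_decreasing) auto
  with s1 have s2: "(\<Sum>t=1..T. tp n (g t)) \<le> 6 * real T * a^D" by simp
  have "a^(D+1) = real (2^(D+1)) powr (- 1 / real n)"
  proof -
    have e: "(2::real) powr real (D+1) = 2^(D+1)" by (rule powr_realpow) simp
    have "real (2^(D+1)) powr (- 1 / real n) = (2 powr real (D+1)) powr (- 1 / real n)"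
      by (simp only: e of_nat_power of_nat_numeral)
    also have "\<dots> = 2 powr (- real (D+1) / real n)"
    proof -
      have m: "real (D+1) * (- 1 / real n) = - real (D+1) / real n" using n0 by (simp add: field_simps)
      show ?thesis by (simp only: powr_powr m)
    qed
    also have "\<dots> = a^(D+1)" using tpk[of "D+1"] by (simp add: tp_def)
    finally show ?thesis by simp
  qed
  also have "\<dots> \<le> real T powr (- 1 / real n)"
  proof -
    have "real T \<le> real (2^(D+1))" using D(2) by (simp only: of_nat_le_iff)
    then show ?thesis using T by (intro powr_mono2') auto
  qed
  finally have "a^(D+1) \<le> real T powr (- 1 / real n)" .
  moreover have "a^D \<le> 2 * a^(D+1)" using a7 a0 by simp
  ultimately have "a^D \<le> 2 * real T powr (- 1 / real n)" by simp
  then have "6 * real T * a^D \<le> 6 * real T * (2 * real T powr (- 1 / real n))"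
    by (intro mult_left_mono) auto
  with s2 show ?thesis by simp
qed



definition E :: "nat \<Rightarrow> (nat \<Rightarrow> vec \<times> vec) \<Rightarrow> nat \<Rightarrow> nat \<Rightarrow> nat" where
  "E n X k t = card {s\<in>{1..t}. snd (X s) = vd n k}"

lemma E_Suc: "E n X k (Suc t) = E n X k t + (if snd (X (Suc t)) = vd n k then 1 else 0)"
proof -
  have "{s\<in>{1..Suc t}. snd (X s) = vd n k} =
      (if snd (X (Suc t)) = vd n k then insert (Suc t) {s\<in>{1..t}. snd (X s) = vd n k}
       else {s\<in>{1..t}. snd (X s) = vd n k})"
    by (auto simp: le_Suc_eq)
  then show ?thesis by (simp add: E_def)
qed

lemma E_1: "E n X k 1 = (if snd (X 1) = vd n k then 1 else 0)"
proof -
  have "{s\<in>{1..1::nat}. snd (X s) = vd n k} = (if snd (X 1) = vd n k then {1} else {})" by auto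
  then show ?thesis by (simp add: E_def)
qed

definition Inv :: "nat \<Rightarrow> real \<Rightarrow> (vec \<Rightarrow> real) \<Rightarrow> (nat \<Rightarrow> cand multiset) \<Rightarrow> (nat \<Rightarrow> vec \<times> vec) \<Rightarrow> nat \<Rightarrow> bool" where
  "Inv n L f Q X t = ((\<forall>c\<in>#Q t. goodc n L f c) \<and>
     (\<forall>y\<in>cube n. \<exists>c\<in>#Q t. inbox n (fst c) (fst (snd c)) y) \<and>
     (\<forall>k. cnt n (Suc k) (Q t) + E n X (Suc k) t = 2 * E n X k t) \<and>
     (\<forall>s\<in>{1..t}. \<exists>k. snd (X s) = vd n k \<and>
         f (proj n (fst (X s))) - (INF x\<in>cube n. f x) \<le> 4 * L * sqrt (real n) * tp n k \<and>
         (2 \<le> s \<longrightarrow> 1 \<le> k)))"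

lemma cube_ne: "(\<lambda>i. 0) \<in> cube n" by (simp add: cube_def)

lemma vnorm_one: "vnorm n (\<lambda>i. 1) = sqrt (real n)" by (simp add: vnorm_def)

lemma lip_lower: assumes lp: "lip n L f" and L: "L > 0" and p: "p \<in> cube n" and y: "y \<in> cube n"
  shows "f p - L * sqrt (real n) \<le> f y"
proof -
  have "\<forall>i<n. \<bar>p i - y i\<bar> \<le> 1"
  proof (intro allI impI)
    fix i assume i: "i < n"
    then have "0 \<le> p i" "p i \<le> 1" "0 \<le> y i" "y i \<le> 1" using p y by (auto simp: cube_def)
    then show "\<bar>p i - y i\<bar> \<le> 1" unfolding abs_le_iff by linarith
  qed
  then have "vnorm n (\<lambda>i. p i - y i) \<le> sqrt (real n)" using vnorm_mono[of n "\<lambda>i. p i - y i" "\<lambda>i. 1"] vnorm_one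
    by simp
  then have "L * vnorm n (\<lambda>i. p i - y i) \<le> L * sqrt (real n)" using L by (simp add: mult_left_mono)
  moreover have "f p - f y \<le> L * vnorm n (\<lambda>i. p i - y i)" using lipD[OF lp p y] .
  ultimately show ?thesis by simp
qed

lemma bdd: assumes lp: "lip n L f" and L: "L > 0" shows "bdd_below (f ` cube n)"
  using lip_lower[OF lp L cube_ne] by (auto simp: bdd_below_def)

lemma le_INF: fixes f :: "vec \<Rightarrow> real" assumes "\<forall>y\<in>cube n. s \<le> f y" shows "s \<le> (INF x\<in>cube n. f x)"
proof (rule cINF_greatest)
  show "cube n \<noteq> {}" using cube_ne by blast
qed (use assms in auto)

lemma inv_all: assumes n2: "n \<ge> 2" and L: "L > 0" and lp: "lip n L f" and run: "is_run n L f Q X"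
  shows "Inv n L f Q X (Suc m)"
proof (induction m)
  case 0
  have n: "n > 0" using n2 by simp
  have X1: "X 1 = (vd n 0, vd n 0)" and Q1: "Q 1 = split_cands n L (vd n 0) (vd n 0) (f (proj n (vd n 0)))"
    using run init_vd[OF n] by (auto simp: is_run_def)
  have g: "\<forall>c\<in>#Q 1. goodc n L f c" using split_good[OF n L lp] Q1 by simp
  have cv: "\<forall>y\<in>cube n. \<exists>c\<in>#Q 1. inbox n (fst c) (fst (snd c)) y"
  proof
    fix y assume y: "y \<in> cube n"
    have "inbox n (vd n 0) (vd n 0) y"
      unfolding inbox_def
    proof (intro allI impI)
      fix i assume i: "i < n"
      have "0 \<le> y i" "y i \<le> 1" using y i by (auto simp: cube_def)
      moreover have "1 \<le> 2 * vd n 0 i" using vd0_half[OF n i] .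
      ultimately show "\<bar>y i - vd n 0 i\<bar> \<le> vd n 0 i" unfolding abs_le_iff by linarith
    qed
    then show "\<exists>c\<in>#Q 1. inbox n (fst c) (fst (snd c)) y" unfolding Q1 by (rule split_cover[OF n])
  qed
  have ne: "vd n 0 \<noteq> vd n (Suc k)" for k using vd_inj[OF n, of 0 "Suc k"] by auto
  have ct: "\<forall>k. cnt n (Suc k) (Q 1) + E n X (Suc k) 1 = 2 * E n X k 1"
  proof
    fix k
    show "cnt n (Suc k) (Q 1) + E n X (Suc k) 1 = 2 * E n X k 1"
      unfolding Q1 split_cnt[OF n] E_1 X1 using ne[of k] vd_inj[OF n, of 0 k] by auto
  qed
  have rg: "f (proj n (fst (X 1))) - (INF x\<in>cube n. f x) \<le> 4 * L * sqrt (real n) * tp n 0"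
  proof -
    have "f (proj n (vd n 0)) - L * sqrt (real n) \<le> (INF x\<in>cube n. f x)"
      using lip_lower[OF lp L proj_cube] by (intro le_INF) auto
    moreover have "tp n 0 = 1" by (simp add: tp_def)
    moreover have "0 \<le> L * sqrt (real n)" using L by simp
    ultimately show ?thesis using X1 by simp
  qed
  show ?case unfolding Inv_def using g cv ct rg X1 by auto
next
  case (Suc m)
  have n: "n > 0" using n2 by simp
  define t where "t = Suc (Suc m)"
  have tm: "t - 1 = Suc m" by (simp add: t_def)
  obtain s where mem: "(fst (X t), snd (X t), s) \<in># Q (Suc m)"
    and mn: "\<forall>c\<in>#Q (Suc m). s \<le> snd (snd c)"
    and Qt: "Q t = Q (Suc m) - {# (fst (X t), snd (X t), s) #}
                 + split_cands n L (fst (X t)) (snd (X t)) (f (proj n (fst (X t))))"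
    using run unfolding is_run_def tm[symmetric] by (metis t_def le_add1 add_2_eq_Suc)
  define c where "c = (fst (X t), snd (X t), s)"
  define R where "R = Q (Suc m) - {#c#}"
  have IH: "Inv n L f Q X (Suc m)" by (rule Suc.IH)
  have gc: "goodc n L f c" using IH mem by (simp add: Inv_def c_def)
  then obtain d0 where vt: "snd (X t) = vd n (Suc d0)"
    and fb: "f (proj n (fst (X t))) - s \<le> 2 * L * vnorm n (vd n d0)"
    unfolding goodc_def c_def by auto
  define S where "S = split_cands n L (fst (X t)) (vd n (Suc d0)) (f (proj n (fst (X t))))"
  have QtS: "Q t = R + S" using Qt by (simp add: R_def S_def c_def vt)
  have QR: "Q (Suc m) = add_mset c R" using mem by (simp add: R_def c_def)
  have sINF: "s \<le> (INF x\<in>cube n. f x)"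
  proof (rule le_INF, rule ballI)
    fix y assume y: "y \<in> cube n"
    obtain c' where c': "c' \<in># Q (Suc m)" "inbox n (fst c') (fst (snd c')) y"
      using IH y unfolding Inv_def by blast
    have "goodc n L f c'" using IH c'(1) by (simp add: Inv_def)
    then have "snd (snd c') \<le> f y" using c'(2) y unfolding goodc_def by blast
    moreover have "s \<le> snd (snd c')" using mn c'(1) by blast
    ultimately show "s \<le> f y" by simp
  qed
  have g: "\<forall>c'\<in>#Q t. goodc n L f c'"
  proof
    fix c' assume "c' \<in># Q t"
    then have "c' \<in># R \<or> c' \<in># S" using QtS by simp
    then show "goodc n L f c'"
    proof
      assume "c' \<in># R"
      then have "c' \<in># Q (Suc m)" using QR by simp
      then show ?thesis using IH by (simp add: Inv_def)
    next
      assume "c' \<in># S"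
      then show ?thesis unfolding S_def by (rule split_good[OF n L lp])
    qed
  qed
  have cv: "\<forall>y\<in>cube n. \<exists>c'\<in>#Q t. inbox n (fst c') (fst (snd c')) y"
  proof
    fix y assume y: "y \<in> cube n"
    obtain c' where c': "c' \<in># Q (Suc m)" "inbox n (fst c') (fst (snd c')) y"
      using IH y unfolding Inv_def by blast
    show "\<exists>c'\<in>#Q t. inbox n (fst c') (fst (snd c')) y"
    proof (cases "c' = c")
      case True
      then have "inbox n (fst (X t)) (vd n (Suc d0)) y" using c'(2) vt by (simp add: c_def)
      then obtain c'' where "c'' \<in># S" "inbox n (fst c'') (fst (snd c'')) y"
        using split_cover[OF n] unfolding S_def by blast
      then show ?thesis using QtS by auto
    next
      case False
      then have "c' \<in># R" using c'(1) QR by simp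
      then show ?thesis using QtS c'(2) by auto
    qed
  qed
  have ct: "\<forall>k. cnt n (Suc k) (Q t) + E n X (Suc k) t = 2 * E n X k t"
  proof
    fix k
    have ih: "cnt n (Suc k) (Q (Suc m)) + E n X (Suc k) (Suc m) = 2 * E n X k (Suc m)"
      using IH by (simp add: Inv_def)
    have eqv: "vd n (Suc d0) = vd n j \<longleftrightarrow> j = Suc d0" for j using vd_inj[OF n] by blast
    have c1: "cnt n j (Q (Suc m)) = cnt n j R + (if j = Suc d0 then 1 else 0)" for j
      unfolding QR using eqv[of j] by (simp add: cnt_def c_def vt)
    have c2: "cnt n j (Q t) = cnt n j R + (if j = Suc (Suc d0) then 2 else 0)" for j
      unfolding QtS cnt_plus S_def split_cnt[OF n] by simp
    have e1: "E n X j t = E n X j (Suc m) + (if j = Suc d0 then 1 else 0)" for j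
      unfolding t_def E_Suc using eqv[of j] vt t_def by simp
    show "cnt n (Suc k) (Q t) + E n X (Suc k) t = 2 * E n X k t"
      using ih c1[of "Suc k"] c2[of "Suc k"] e1[of k] e1[of "Suc k"] by auto
  qed
  have rg: "\<forall>s'\<in>{1..t}. \<exists>k. snd (X s') = vd n k \<and>
         f (proj n (fst (X s'))) - (INF x\<in>cube n. f x) \<le> 4 * L * sqrt (real n) * tp n k \<and>
         (2 \<le> s' \<longrightarrow> 1 \<le> k)"
  proof
    fix s' assume s': "s' \<in> {1..t}"
    show "\<exists>k. snd (X s') = vd n k \<and>
         f (proj n (fst (X s'))) - (INF x\<in>cube n. f x) \<le> 4 * L * sqrt (real n) * tp n k \<and>
         (2 \<le> s' \<longrightarrow> 1 \<le> k)"
    proof (cases "s' = t")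
      case False
      then have "s' \<in> {1..Suc m}" using s' by (auto simp: t_def)
      then show ?thesis using IH by (simp add: Inv_def)
    next
      case True
      have "vnorm n (vd n d0) \<le> sqrt (real n) * tp n (Suc d0)" using vd_norm[OF n, of d0] by simp
      then have "2 * L * vnorm n (vd n d0) \<le> 2 * L * (sqrt (real n) * tp n (Suc d0))"
        using L by (intro mult_left_mono) auto
      moreover have "0 \<le> L * sqrt (real n) * tp n (Suc d0)"
        using L tp_pos[of n "Suc d0"] by simp
      ultimately have "f (proj n (fst (X t))) - (INF x\<in>cube n. f x) \<le> 4 * L * sqrt (real n) * tp n (Suc d0)"
        using fb sINF by simp
      then show ?thesis using True vt by auto
    qed
  qed
  show ?case unfolding Inv_def t_def[symmetric] using g cv ct rg by blast
qed



lemma card_bound: assumes n2: "n \<ge> 2" and L: "L > 0" and lp: "lip n L f" and run: "is_run n L f Q X"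
  and T: "T \<ge> 1"
  shows "(1 / real T) * (\<Sum>t=1..T. f (proj n (fst (X t)))) - (INF x\<in>cube n. f x)
              \<le> 48 * L * sqrt (real n) * real T powr (- 1 / real n)"
proof -
  have n: "n > 0" using n2 by simp
  obtain m where Tm: "T = Suc m" using T by (cases T) auto
  have I: "Inv n L f Q X T" using inv_all[OF n2 L lp run] Tm by simp
  define F where "F = (INF x\<in>cube n. f x)"
  have "\<forall>s\<in>{1..T}. \<exists>k. snd (X s) = vd n k \<and>
         f (proj n (fst (X s))) - F \<le> 4 * L * sqrt (real n) * tp n k \<and> (2 \<le> s \<longrightarrow> 1 \<le> k)"
    using I by (simp add: Inv_def F_def)
  then obtain g where g: "\<forall>s\<in>{1..T}. snd (X s) = vd n (g s) \<and>
         f (proj n (fst (X s))) - F \<le> 4 * L * sqrt (real n) * tp n (g s) \<and> (2 \<le> s \<longrightarrow> 1 \<le> g s)"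
    by (metis bchoice)
  have Eg: "E n X k T = card {t\<in>{1..T}. g t = k}" for k
  proof -
    have "{t\<in>{1..T}. snd (X t) = vd n k} = {t\<in>{1..T}. g t = k}"
      using g vd_inj[OF n] by auto
    then show ?thesis by (simp add: E_def)
  qed
  have E0: "E n X 0 T \<le> 1"
  proof -
    have "{t\<in>{1..T}. g t = 0} \<subseteq> {1}"
    proof
      fix t assume t: "t \<in> {t\<in>{1..T}. g t = 0}"
      then have "t \<in> {1..T}" "g t = 0" by auto
      then have "\<not> 2 \<le> t" using g by fastforce
      then show "t \<in> {1}" using \<open>t \<in> {1..T}\<close> by simp
    qed
    then have "card {t\<in>{1..T}. g t = 0} \<le> card {1::nat}" by (intro card_mono) auto
    then show ?thesis by (simp add: Eg)
  qed
  have ES: "E n X (Suc k) T \<le> 2 * E n X k T" for k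
    using I by (simp add: Inv_def) (metis le_add2)
  have cb: "E n X k T \<le> 2^k" for k
  proof (induction k)
    case 0 then show ?case using E0 by simp
  next
    case (Suc k) then show ?case using ES[of k] by simp
  qed
  have sb: "(\<Sum>t=1..T. tp n (g t)) \<le> 12 * real T * real T powr (- 1 / real n)"
    using sum_bound[OF n2 T] cb Eg by simp
  have "(\<Sum>t=1..T. f (proj n (fst (X t)))) - real T * F = (\<Sum>t=1..T. f (proj n (fst (X t))) - F)"
    by (simp add: sum_subtractf)
  also have "\<dots> \<le> (\<Sum>t=1..T. 4 * L * sqrt (real n) * tp n (g t))"
    using g by (intro sum_mono) auto
  also have "\<dots> = 4 * L * sqrt (real n) * (\<Sum>t=1..T. tp n (g t))" by (simp add: sum_distrib_left)
  also have "\<dots> \<le> 4 * L * sqrt (real n) * (12 * real T * real T powr (- 1 / real n))"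
    using sb L by (intro mult_left_mono) auto
  finally have k: "(\<Sum>t=1..T. f (proj n (fst (X t)))) - real T * F
      \<le> real T * (48 * L * sqrt (real n) * real T powr (- 1 / real n))" by (simp add: ac_simps)
  have Tp: "real T > 0" using T by simp
  have "(1 / real T) * (\<Sum>t=1..T. f (proj n (fst (X t)))) - F
      = ((\<Sum>t=1..T. f (proj n (fst (X t)))) - real T * F) / real T"
    using Tp by (simp add: field_simps)
  also have "\<dots> \<le> 48 * L * sqrt (real n) * real T powr (- 1 / real n)"
    using k Tp by (simp add: divide_le_eq mult.commute)
  finally show ?thesis by (simp add: F_def)
qed

theorem theorem1:
  shows "\<exists>C>0. \<forall>n\<ge>2. \<forall>L>0. \<forall>(f :: vec \<Rightarrow> real) Q X.
     (\<forall>x\<in>cube n. \<forall>y\<in>cube n. \<bar>f x - f y\<bar> \<le> L * vnorm n (\<lambda>i. x i - y i)) \<longrightarrow>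
     is_run n L f Q X \<longrightarrow>
     (\<forall>T\<ge>1. (1 / real T) * (\<Sum>t=1..T. f (proj n (fst (X t)))) - (INF x\<in>cube n. f x)
              \<le> C * L * sqrt (real n) * real T powr (- 1 / real n))"
proof (intro exI[of _ "48::real"] conjI allI impI)
  fix n :: nat and L :: real and f :: "vec \<Rightarrow> real" and Q X and T :: nat
  assume "2 \<le> n" "0 < L" "\<forall>x\<in>cube n. \<forall>y\<in>cube n. \<bar>f x - f y\<bar> \<le> L * vnorm n (\<lambda>i. x i - y i)"
    "is_run n L f Q X" "1 \<le> T"
  then show "(1 / real T) * (\<Sum>t=1..T. f (proj n (fst (X t)))) - (INF x\<in>cube n. f x)
              \<le> 48 * L * sqrt (real n) * real T powr (- 1 / real n)"
    using card_bound[of n L f Q X T] by (simp add: lip_def)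
qed simp


end
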